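(* Let $(h_k)_{k\ge1}$ be the Narayana sequence and let $\alpha$ be the real root of $x^3+x=1$. Then $\|\alpha h_k\|$ decreases exponentially as $k\to\infty$, i.e. there are constants $C>0$ and $0<\rho<1$ with $\|\alpha h_k\|\le C\rho^k$ for all $k$. The same holds with $\alpha$ replaced by any $\beta\in\mathbb{Z}[\alpha]$.
   Context: The Narayana sequence is defined by $h_1=1$, $h_2=2$, $h_3=3$ and $h_k=h_{k-1}+h_{k-3}$ for $k>3$. For real $x$, $\|x\|$ denotes the distance from $x$ to the nearest integer. *)

theory Defs
  imports Complex_Main
begin

text \<open>Narayana sequence h_1 = 1, h_2 = 2, h_3 = 3, h_k = h_(k-1) + h_(k-3) for k > 3.
  Only indices k >= 1 are meaningful; the value at 0 is an irrelevant filler.\<close>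
fun narayana :: "nat \<Rightarrow> int" where
  "narayana 0 = 0"
| "narayana (Suc 0) = 1"
| "narayana (Suc (Suc 0)) = 2"
| "narayana (Suc (Suc (Suc 0))) = 3"
| "narayana (Suc (Suc (Suc (Suc n)))) = narayana (Suc (Suc (Suc n))) + narayana (Suc n)"

definition dist_int :: "real \<Rightarrow> real" where
  "dist_int x = (INF m\<in>(\<int>::real set). \<bar>x - m\<bar>)"

definition nar_alpha :: real where
  "nar_alpha = (THE x::real. x ^ 3 + x = 1)"

text \<open>The ring Z[alpha] = {a + b alpha + c alpha^2 : a, b, c integers} (alpha has degree 3).\<close>
definition Z_alpha :: "real set" where
  "Z_alpha = {of_int a + of_int b * nar_alpha + of_int c * nar_alpha ^ 2 | a b c. True}"

end

theory Submission
  imports Defs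
begin

lemma alpha_props: "nar_alpha ^ 3 + nar_alpha = 1 \<and> 1/2 < nar_alpha \<and> nar_alpha < 1"
proof -
  have mono: "x < y \<Longrightarrow> x^3 + x < y^3 + (y::real)" for x y
  proof -
    assume "x < y"
    have "y^3 + y - (x^3 + x) = (y - x) * ((x + y/2)^2 + 3/4*y^2 + 1)"
      by (simp add: algebra_simps power2_eq_square power3_eq_cube)
    moreover have "(y - x) * ((x + y/2)^2 + 3/4*y^2 + 1) > 0"
      using \<open>x < y\<close> by (intro mult_pos_pos) (auto intro: add_nonneg_pos)
    ultimately show ?thesis by linarith
  qed
  have "\<exists>x::real\<ge>0. x \<le> 1 \<and> x^3 + x = 1"
    by (rule IVT'[of "\<lambda>x::real. x^3 + x" 0 1 1]) (auto intro!: continuous_intros)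
  then obtain x :: real where x: "0 \<le> x" "x \<le> 1" "x^3 + x = 1" by blast
  have uniq: "y^3 + y = 1 \<Longrightarrow> y = x" for y
    using mono[of x y] mono[of y x] x(3) by (cases x y rule: linorder_cases) auto
  have "nar_alpha = x" unfolding nar_alpha_def
    using x(3) uniq by (rule the_equality)
  moreover have "1/2 < x"
  proof (rule ccontr)
    assume "\<not> 1/2 < x"
    then have "x^3 \<le> (1/2)^3" using x(1) by (intro power_mono) auto
    then show False using x(3) \<open>\<not> 1/2 < x\<close> by (simp add: power_divide)
  qed
  moreover have "x < 1"
  proof -
    have "x \<noteq> 1" using x(3) by auto
    then show ?thesis using x(2) by simp
  qed
  ultimately show ?thesis using x by simp
qed

lemma dist_int_le: "dist_int x \<le> \<bar>x - of_int m\<bar>"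
  unfolding dist_int_def
  by (rule cINF_lower) (auto simp: bdd_below_def Ints_def intro!: exI[of _ 0])

lemma dist_int_le1: "dist_int x \<le> 1"
proof -
  have "dist_int x \<le> \<bar>x - of_int \<lfloor>x\<rfloor>\<bar>" by (rule dist_int_le)
  also have "\<dots> \<le> 1" by linarith
  finally show ?thesis .
qed

lemma small_k:
  assumes "0 < \<rho>" "\<rho> < 1" "K \<ge> 0" "\<forall>k\<ge>N. dist_int (x k) \<le> K * \<rho> ^ k"
  shows "\<exists>C>0. \<forall>k. dist_int (x k) \<le> C * \<rho> ^ k"
proof (intro exI[of _ "K + 1 / \<rho> ^ N"] conjI allI)
  show "0 < K + 1 / \<rho> ^ N" using assms by (simp add: add_nonneg_pos)
  fix k
  show "dist_int (x k) \<le> (K + 1 / \<rho> ^ N) * \<rho> ^ k"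
  proof (cases "k \<ge> N")
    case True
    then have "dist_int (x k) \<le> K * \<rho> ^ k" using assms by auto
    also have "\<dots> \<le> (K + 1 / \<rho> ^ N) * \<rho> ^ k"
      using assms by (intro mult_right_mono) auto
    finally show ?thesis .
  next
    case False
    have "\<rho> ^ N \<le> \<rho> ^ k" using False assms by (intro power_decreasing) auto
    then have "1 \<le> \<rho> ^ k / \<rho> ^ N" using assms by simp
    also have "\<dots> \<le> (K + 1 / \<rho> ^ N) * \<rho> ^ k" using assms by (simp add: field_simps)
    finally show ?thesis using dist_int_le1[of "x k"] by linarith
  qed
qed

definition err :: "nat \<Rightarrow> real" where
  "err k = nar_alpha * of_int (narayana k) - of_int (narayana (k - 1))"

lemma err_decay: "\<exists>K \<rho>. K \<ge> 0 \<and> 0 < \<rho> \<and> \<rho> < 1 \<and> (\<forall>k\<ge>2. \<bar>err k\<bar> \<le> K * \<rho> ^ k)"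
proof -
  define a where "a = nar_alpha"
  have a: "a^3 + a = 1" "1/2 < a" "a < 1" using alpha_props by (auto simp: a_def)
  define u where "u n = err (n + 2)" for n
  have rec: "a * u (n+2) + (1-a) * u (n+1) + a^2 * u n = 0" for n
  proof -
    have h: "narayana (n+4) = narayana (n+3) + narayana (n+1)"
      by (simp add: numeral_eq_Suc)
    have "a * u (n+2) + (1-a) * u (n+1) + a^2 * u n
      = a^2 * (of_int (narayana (n+4)) - of_int (narayana (n+3)) - of_int (narayana (n+1)))
        + (a^3 + a - 1) * of_int (narayana (n+2))"
    proof -
      have uu: "u m = a * of_int (narayana (m+2)) - of_int (narayana (m+1))" for m
        by (simp add: u_def err_def a_def)
      have e2: "n + 2 + 2 = n + 4" "n + 2 + 1 = n + 3" "n + 1 + 2 = n + 3" "n + 1 + 1 = n + 2"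
        by simp_all
      show ?thesis unfolding uu e2
        by (simp add: algebra_simps power2_eq_square power3_eq_cube)
    qed
    also have "\<dots> = 0" using h a(1) by simp
    finally show ?thesis .
  qed
  define Q where "Q n = a * u (n+1)^2 + (1-a) * u (n+1) * u n + a^2 * u n ^ 2" for n
  have Qstep: "Q (n+1) = a * Q n" for n
  proof -
    have "Q (n+1) - a * Q n = (u (n+2) - a * u n) * (a * u (n+2) + (1-a) * u (n+1) + a^2 * u n)"
      by (simp add: Q_def algebra_simps power2_eq_square power3_eq_cube)
    then show ?thesis using rec[of n] by simp
  qed
  have Qn: "Q n = a ^ n * Q 0" for n
  proof (induction n)
    case (Suc n) then show ?case using Qstep[of n] by simp
  qed simp
  define c where "c = a^3 - (1-a)^2/4"
  have c: "c > 0"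
  proof -
    have "(1/2)^3 < a^3" using a by (intro power_strict_mono) auto
    then have 1: "1/8 < a^3" by (simp add: power_divide)
    have "(1-a)^2 < (1/2)^2" using a by (intro power_strict_mono) auto
    then have 2: "(1-a)^2 < 1/4" by (simp add: power_divide)
    show ?thesis unfolding c_def using 1 2 by linarith
  qed
  have Qlow: "c * u n ^ 2 \<le> a * Q n" for n
  proof -
    have "a * Q n = (a * u (n+1) + (1-a)/2 * u n)^2 + c * u n ^ 2"
      by (simp add: Q_def c_def algebra_simps power2_eq_square power3_eq_cube)
    then show ?thesis by simp
  qed
  have "0 \<le> a * Q 0" using Qlow[of 0] c
    by (meson mult_nonneg_nonneg less_imp_le zero_le_power2 order_trans)
  then have Q0: "Q 0 \<ge> 0" using a by (simp add: zero_le_mult_iff)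
  define \<rho> where "\<rho> = sqrt a"
  define K0 where "K0 = sqrt (a * Q 0 / c)"
  have \<rho>: "0 < \<rho>" "\<rho> < 1" "\<rho>^2 = a" using a by (auto simp: \<rho>_def)
  have ub: "\<bar>u n\<bar> \<le> K0 * \<rho> ^ n" for n
  proof -
    have "u n ^ 2 \<le> a * Q n / c" using Qlow[of n] c
      by (subst pos_le_divide_eq) (auto simp: mult.commute)
    also have "\<dots> = (a * Q 0 / c) * a ^ n" unfolding Qn[of n] by simp
    finally have "sqrt (u n ^ 2) \<le> sqrt ((a * Q 0 / c) * a ^ n)" by (rule real_sqrt_le_mono)
    moreover have "sqrt (u n ^ 2) = \<bar>u n\<bar>" by (rule real_sqrt_abs)
    moreover have "sqrt ((a * Q 0 / c) * a ^ n) = K0 * \<rho> ^ n"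
      unfolding K0_def \<rho>_def by (simp only: real_sqrt_mult real_sqrt_power)
    ultimately show ?thesis by simp
  qed
  have K0: "0 \<le> K0 / \<rho>^2" unfolding K0_def using Q0 c a
    by (intro divide_nonneg_nonneg real_sqrt_ge_zero mult_nonneg_nonneg) auto
  have bnd: "\<forall>k\<ge>2. \<bar>err k\<bar> \<le> K0 / \<rho>^2 * \<rho> ^ k"
  proof (intro allI impI)
    fix k :: nat assume k: "2 \<le> k"
    have kk: "k - 2 + 2 = k" using k by simp
    have "\<bar>err k\<bar> = \<bar>u (k-2)\<bar>" unfolding u_def kk ..
    also have "\<dots> \<le> K0 * \<rho> ^ (k-2)" by (rule ub)
    also have "\<dots> = K0 / \<rho>^2 * \<rho> ^ k"
    proof -
      have "\<rho> ^ k = \<rho> ^ (k-2+2)" unfolding kk ..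
      then have "\<rho> ^ k = \<rho> ^ (k-2) * \<rho>^2" by (simp only: power_add)
      then show ?thesis using \<rho> a by simp
    qed
    finally show "\<bar>err k\<bar> \<le> K0 / \<rho>^2 * \<rho> ^ k" .
  qed
  show ?thesis using K0 bnd \<rho>(1,2) by blast
qed

theorem mainTheorem3:
  shows "(\<exists>C::real. \<exists>\<rho>::real. C > 0 \<and> 0 < \<rho> \<and> \<rho> < 1 \<and>
            (\<forall>k\<ge>1. dist_int (nar_alpha * of_int (narayana k)) \<le> C * \<rho> ^ k))
       \<and> (\<forall>\<beta>\<in>Z_alpha. \<exists>C::real. \<exists>\<rho>::real. C > 0 \<and> 0 < \<rho> \<and> \<rho> < 1 \<and>
            (\<forall>k\<ge>1. dist_int (\<beta> * of_int (narayana k)) \<le> C * \<rho> ^ k))"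
proof -
  obtain K \<rho> where K: "K \<ge> 0" "0 < \<rho>" "\<rho> < 1" "\<forall>k\<ge>2. \<bar>err k\<bar> \<le> K * \<rho> ^ k"
    using err_decay by blast
  have gen: "\<forall>\<beta>\<in>Z_alpha. \<exists>C::real. \<exists>\<rho>::real. C > 0 \<and> 0 < \<rho> \<and> \<rho> < 1 \<and>
            (\<forall>k\<ge>1. dist_int (\<beta> * of_int (narayana k)) \<le> C * \<rho> ^ k)"
  proof
    fix \<beta> assume "\<beta> \<in> Z_alpha"
    then obtain a b c where \<beta>: "\<beta> = of_int a + of_int b * nar_alpha + of_int c * nar_alpha ^ 2"
      unfolding Z_alpha_def by blast
    define K' where "K' = K * (\<bar>of_int b\<bar> + \<bar>of_int c\<bar> + \<bar>of_int c\<bar> / \<rho>)"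
    have K': "K' \<ge> 0" using K by (simp add: K'_def)
    have "\<forall>k\<ge>3. dist_int (\<beta> * of_int (narayana k)) \<le> K' * \<rho> ^ k"
    proof (intro allI impI)
      fix k :: nat assume k: "3 \<le> k"
      define m where "m = a * narayana k + b * narayana (k-1) + c * narayana (k-2)"
      have al: "0 < nar_alpha" "nar_alpha < 1" using alpha_props by auto
      have e1: "err (k-1) = nar_alpha * of_int (narayana (k-1)) - of_int (narayana (k-2))"
      proof -
        have kk: "k - 1 - 1 = k - 2" by simp
        show ?thesis by (simp only: err_def kk)
      qed
      have eq: "\<beta> * of_int (narayana k) - of_int m
          = of_int b * err k + of_int c * (nar_alpha * err k + err (k-1))"
        unfolding \<beta> m_def e1 by (simp add: err_def algebra_simps power2_eq_square)
      have b1: "\<bar>err k\<bar> \<le> K * \<rho> ^ k" using K k by auto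
      have b2: "\<bar>err (k-1)\<bar> \<le> K * \<rho> ^ (k-1)" using K k by auto
      have r: "\<rho> ^ (k-1) = \<rho>^k / \<rho>" using k K by (simp add: power_diff)
      have "dist_int (\<beta> * of_int (narayana k)) \<le> \<bar>\<beta> * of_int (narayana k) - of_int m\<bar>"
        by (rule dist_int_le)
      also have "\<dots> \<le> \<bar>of_int b\<bar> * \<bar>err k\<bar> + \<bar>of_int c\<bar> * (nar_alpha * \<bar>err k\<bar> + \<bar>err (k-1)\<bar>)"
        unfolding eq
      proof -
        have t1: "\<bar>nar_alpha * err k + err (k-1)\<bar> \<le> nar_alpha * \<bar>err k\<bar> + \<bar>err (k-1)\<bar>"
          using al abs_triangle_ineq[of "nar_alpha * err k" "err (k-1)"] by (simp add: abs_mult)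
        have "\<bar>of_int b * err k + of_int c * (nar_alpha * err k + err (k-1))\<bar>
          \<le> \<bar>of_int b\<bar> * \<bar>err k\<bar> + \<bar>of_int c\<bar> * \<bar>nar_alpha * err k + err (k-1)\<bar>"
          using abs_triangle_ineq by (metis abs_mult)
        also have "\<dots> \<le> \<bar>of_int b\<bar> * \<bar>err k\<bar> + \<bar>of_int c\<bar> * (nar_alpha * \<bar>err k\<bar> + \<bar>err (k-1)\<bar>)"
          using t1 by (intro add_left_mono mult_left_mono) auto
        finally show "\<bar>of_int b * err k + of_int c * (nar_alpha * err k + err (k-1))\<bar>
          \<le> \<bar>of_int b\<bar> * \<bar>err k\<bar> + \<bar>of_int c\<bar> * (nar_alpha * \<bar>err k\<bar> + \<bar>err (k-1)\<bar>)" .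
      qed
      also have "\<dots> \<le> \<bar>of_int b\<bar> * (K * \<rho> ^ k) + \<bar>of_int c\<bar> * (K * \<rho> ^ k + K * \<rho> ^ (k-1))"
      proof -
        have "nar_alpha * \<bar>err k\<bar> \<le> \<bar>err k\<bar>"
          using al by (intro mult_left_le_one_le) auto
        then have "nar_alpha * \<bar>err k\<bar> + \<bar>err (k-1)\<bar> \<le> K * \<rho> ^ k + K * \<rho> ^ (k-1)"
          using b1 b2 by linarith
        then have "\<bar>of_int c\<bar> * (nar_alpha * \<bar>err k\<bar> + \<bar>err (k-1)\<bar>)
            \<le> \<bar>of_int c\<bar> * (K * \<rho> ^ k + K * \<rho> ^ (k-1))"
          by (rule mult_left_mono) simp
        moreover have "\<bar>of_int b\<bar> * \<bar>err k\<bar> \<le> \<bar>of_int b\<bar> * (K * \<rho> ^ k)"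
          using b1 by (rule mult_left_mono) simp
        ultimately show ?thesis by linarith
      qed
      also have "\<dots> = K' * \<rho> ^ k" unfolding K'_def r using K by (simp add: field_simps)
      finally show "dist_int (\<beta> * of_int (narayana k)) \<le> K' * \<rho> ^ k" .
    qed
    from small_k[OF K(2,3) K' this] obtain C where "C > 0"
      "\<forall>k. dist_int (\<beta> * of_int (narayana k)) \<le> C * \<rho> ^ k" by blast
    then show "\<exists>C::real. \<exists>\<rho>::real. C > 0 \<and> 0 < \<rho> \<and> \<rho> < 1 \<and>
            (\<forall>k\<ge>1. dist_int (\<beta> * of_int (narayana k)) \<le> C * \<rho> ^ k)"
      using K by blast
  qed
  have e: "nar_alpha = of_int (0::int) + of_int (1::int) * nar_alpha + of_int (0::int) * nar_alpha ^ 2"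
    by simp
  have "nar_alpha \<in> Z_alpha" unfolding Z_alpha_def mem_Collect_eq
    by (intro exI conjI TrueI, rule e)
  then show ?thesis by (rule conjI[OF bspec[OF gen] gen])
qed

end
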